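(* There exist an environment (a state space $\mathcal{X}$, a control set $\mathcal{U}$, an initial state distribution, Markovian stochastic stationary dynamics $p(\mathbf{x}_{t+1}\mid \mathbf{x}_t,\mathbf{u}_t)$, a time horizon $T$ and a surrogate loss $l$), a supervisor policy $\pi^*:\mathcal{X}\to\mathcal{U}$, and a policy class $\{\pi_\theta:\theta\in\Theta\}$ such that, with $\theta_{HC}^N$ and $\theta_{RC}^N$ as defined in the context: (i) there is a $\theta^*\in\Theta$ which is the unique minimizer over $\theta\in\Theta$ of $E_{p(\tau\mid\theta)}[J(\theta,\tau)]$; (ii) $\lim_{N\to\infty}\theta_{HC}^N=\theta^*$ with probability $1$; (iii) for every number $m\ge 1$ of initial supervisor demonstrations, $\lim_{N\to\infty}\theta_{RC}^N\neq\theta^*$ with probability at least $c\,e^{-m}$, where $c>0$ is a universal constant. In other words, even with infinite data the robot-centric procedure may converge to a suboptimal policy while the human-centric procedure converges to the unique best policy in the class.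
   Context: Setting: a robot task has state space $\mathcal{X}$, control set $\mathcal{U}$, an initial state density $p(\mathbf{x}_0)$ and Markovian, stochastic, stationary dynamics $p(\mathbf{x}_{t+1}\mid\mathbf{u}_t,\mathbf{x}_t)$. A trajectory of horizon $T$ is $\tau=((\mathbf{x}_0,\mathbf{u}_0),\dots,(\mathbf{x}_T,\mathbf{u}_T))$. A policy is a map $\pi:\mathcal{X}\to\mathcal{U}$; a parametrized policy class is $\{\pi_\theta:\theta\in\Theta\}$, and rolling out $\pi_\theta$ induces the trajectory density $p(\tau\mid\theta)=p(\mathbf{x}_0)\prod_{t}p(\mathbf{x}_{t+1}\mid\mathbf{u}_t,\mathbf{x}_t)p(\mathbf{u}_t\mid\mathbf{x}_t,\theta)$. A supervisor policy $\pi^*$ (not necessarily in the class) labels states with controls. A surrogate loss $l:\mathcal{U}\times\mathcal{U}\to\mathbb{R}_{\ge 0}$ (e.g. the $0/1$ loss) measures disagreement of controls, and the trajectory loss is $J(\theta,\tau)=\sum_{t} l(\pi_\theta(\mathbf{x}_t),\pi^*(\mathbf{x}_t))$, summed over the states $\mathbf{x}_t$ of $\tau$. Human-centric (HC) learning: the supervisor provides $N$ demonstration trajectories $\tau^1,\dots,\tau^N$ sampled i.i.d. by rolling out the supervisor's policy $\pi^*$, and $\theta_{HC}^N\in\arg\min_{\theta\in\Theta}\sum_{i=1}^N J(\theta,\tau^i)$. Robot-centric (RC) learning (DAgger with no mixing): start with a dataset $\mathcal{D}$ of all state–control pairs from $m$ supervisor demonstration trajectories (rolled out under $\pi^*$).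 Iterate: (Step 1) compute $\theta_k\in\arg\min_{\theta\in\Theta}\sum_{(\mathbf{x},\mathbf{u})\in\mathcal{D}_k} l(\pi_\theta(\mathbf{x}),\mathbf{u})$, each pair weighted equally; (Step 2) roll out the robot's current policy $\pi_{\theta_k}$ in the environment, have the supervisor label every visited state $\mathbf{x}_t$ with its control $\pi^*(\mathbf{x}_t)$, and add these labeled pairs to the dataset to form $\mathcal{D}_{k+1}$. $\theta_{RC}^N$ denotes the policy produced by this procedure after $N$ iterations (i.e., trained on the $m$ initial demonstrations plus $N$ robot rollouts with supervisor labels). *)

theory Defs
  imports "HOL-Probability.Probability"
begin

text \<open>States and controls are encoded as natural numbers (countable spaces).
  A state--control pair is (x, u); a trajectory is the list
  [(x_0,u_0), ..., (x_T,u_T)].\<close>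

type_synonym traj = "(nat \<times> nat) list"

text \<open>Rollout of a (deterministic) policy pol from state x for n further steps,
  under the stochastic stationary Markovian dynamics P x u = p(x' | u, x).\<close>
fun roll :: "(nat \<Rightarrow> nat \<Rightarrow> nat pmf) \<Rightarrow> (nat \<Rightarrow> nat) \<Rightarrow> nat \<Rightarrow> nat \<Rightarrow> traj pmf" where
  "roll P pol 0 x = return_pmf [(x, pol x)]"
| "roll P pol (Suc n) x =
     bind_pmf (P x (pol x)) (\<lambda>x'. map_pmf (\<lambda>r. (x, pol x) # r) (roll P pol n x'))"

definition traj_pmf :: "nat pmf \<Rightarrow> (nat \<Rightarrow> nat \<Rightarrow> nat pmf) \<Rightarrow> (nat \<Rightarrow> nat) \<Rightarrow> nat \<Rightarrow> traj pmf" where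
  "traj_pmf p0 P pol T = bind_pmf p0 (roll P pol T)"

definition Jloss :: "(nat \<Rightarrow> nat \<Rightarrow> real) \<Rightarrow> (real \<Rightarrow> nat \<Rightarrow> nat) \<Rightarrow> (nat \<Rightarrow> nat)
    \<Rightarrow> real \<Rightarrow> traj \<Rightarrow> real" where
  "Jloss l polc pistar \<theta> \<tau> = sum_list (map (\<lambda>(x, u). l (polc \<theta> x) (pistar x)) \<tau>)"

definition exp_loss :: "nat pmf \<Rightarrow> (nat \<Rightarrow> nat \<Rightarrow> nat pmf) \<Rightarrow> nat \<Rightarrow> (nat \<Rightarrow> nat \<Rightarrow> real)
    \<Rightarrow> (real \<Rightarrow> nat \<Rightarrow> nat) \<Rightarrow> (nat \<Rightarrow> nat) \<Rightarrow> real \<Rightarrow> ennreal" where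
  "exp_loss p0 P T l polc pistar \<theta> =
     (\<integral>\<^sup>+ \<tau>. ennreal (Jloss l polc pistar \<theta> \<tau>) \<partial>measure_pmf (traj_pmf p0 P (polc \<theta>) T))"

definition is_argmin_on :: "real set \<Rightarrow> (real \<Rightarrow> real) \<Rightarrow> real \<Rightarrow> bool" where
  "is_argmin_on \<Theta> f \<theta> \<longleftrightarrow> \<theta> \<in> \<Theta> \<and> (\<forall>\<theta>'\<in>\<Theta>. f \<theta> \<le> f \<theta>')"

definition hc_obj :: "(nat \<Rightarrow> nat \<Rightarrow> real) \<Rightarrow> (real \<Rightarrow> nat \<Rightarrow> nat) \<Rightarrow> (nat \<Rightarrow> nat)
    \<Rightarrow> traj list \<Rightarrow> real \<Rightarrow> real" where
  "hc_obj l polc pistar \<tau>s \<theta> = sum_list (map (Jloss l polc pistar \<theta>) \<tau>s)"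

definition rc_obj :: "(nat \<Rightarrow> nat \<Rightarrow> real) \<Rightarrow> (real \<Rightarrow> nat \<Rightarrow> nat) \<Rightarrow> (nat \<times> nat) list
    \<Rightarrow> real \<Rightarrow> real" where
  "rc_obj l polc D \<theta> = sum_list (map (\<lambda>(x, u). l (polc \<theta> x) u) D)"

definition label :: "(nat \<Rightarrow> nat) \<Rightarrow> traj \<Rightarrow> (nat \<times> nat) list" where
  "label pistar \<tau> = map (\<lambda>(x, u). (x, pistar x)) \<tau>"

definition rc_data :: "(nat \<Rightarrow> nat) \<Rightarrow> (nat \<Rightarrow> traj) \<Rightarrow> nat \<Rightarrow> (nat \<times> nat) list" where
  "rc_data pistar \<omega> n = concat (map (\<lambda>i. label pistar (\<omega> i)) [0..<n])"

text \<open>Conditional law of the i-th trajectory of the robot-centric procedure given the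
  previous ones: the first m are supervisor demonstrations, afterwards the i-th
  trajectory is a rollout of the robot policy trained (via the selection rule sel)
  on the dataset of the previous i trajectories.\<close>
definition rc_kernel :: "nat pmf \<Rightarrow> (nat \<Rightarrow> nat \<Rightarrow> nat pmf) \<Rightarrow> nat \<Rightarrow> (real \<Rightarrow> nat \<Rightarrow> nat)
    \<Rightarrow> (nat \<Rightarrow> nat) \<Rightarrow> ((nat \<times> nat) list \<Rightarrow> real) \<Rightarrow> nat \<Rightarrow> nat \<Rightarrow> (nat \<Rightarrow> traj) \<Rightarrow> traj measure" where
  "rc_kernel p0 P T polc pistar sel m i \<omega> =
     measure_pmf (traj_pmf p0 P (if i < m then pistar else polc (sel (rc_data pistar \<omega> i))) T)"

definition rc_measure :: "nat pmf \<Rightarrow> (nat \<Rightarrow> nat \<Rightarrow> nat pmf) \<Rightarrow> nat \<Rightarrow> (real \<Rightarrow> nat \<Rightarrow> nat)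
    \<Rightarrow> (nat \<Rightarrow> nat) \<Rightarrow> ((nat \<times> nat) list \<Rightarrow> real) \<Rightarrow> nat \<Rightarrow> (nat \<Rightarrow> traj) measure" where
  "rc_measure p0 P T polc pistar sel m =
     projective_family.lim UNIV
       (Ionescu_Tulcea.CI (rc_kernel p0 P T polc pistar sel m) (\<lambda>_. count_space UNIV))
       (\<lambda>_. count_space UNIV)"

end

theory Submission
  imports Defs
begin



definition w :: "nat \<Rightarrow> real" where
  "w u = (if u = 3 then 1 else if u = 4 then 1 else if u = 6 then 3 else if u = 7 then 2 else 0)"
definition lX :: "nat \<Rightarrow> nat \<Rightarrow> real" where "lX u v = w u"
definition PX :: "nat \<Rightarrow> nat \<Rightarrow> nat pmf" where
  "PX x u = return_pmf (if u = 0 then 2 else if u = 1 then 3 else 1)"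
definition pX :: "nat \<Rightarrow> nat" where "pX x = 100"
definition cX :: "real \<Rightarrow> nat \<Rightarrow> nat" where "cX \<theta> x = 2*x + (if \<theta> = 0 then 0 else 1)"
definition p0X :: "nat pmf" where "p0X = return_pmf 0"

definition tS :: traj where "tS = [(0,100),(1,100)]"
definition t0 :: traj where "t0 = [(0,0),(2,4)]"
definition t1 :: traj where "t1 = [(0,1),(3,7)]"

lemma traj_S: "traj_pmf p0X PX pX (Suc 0) = return_pmf tS"
  by (simp add: traj_pmf_def p0X_def PX_def pX_def tS_def bind_return_pmf map_return_pmf)
lemma traj_0: "traj_pmf p0X PX (cX 0) (Suc 0) = return_pmf t0"
  by (simp add: traj_pmf_def p0X_def PX_def cX_def t0_def bind_return_pmf map_return_pmf)
lemma traj_1: "\<theta> \<noteq> 0 \<Longrightarrow> traj_pmf p0X PX (cX \<theta>) (Suc 0) = return_pmf t1"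
  by (simp add: traj_pmf_def p0X_def PX_def cX_def t1_def bind_return_pmf map_return_pmf)

abbreviation "JJ \<equiv> Jloss lX cX pX"

lemma J_vals:
  "JJ 0 tS = 0" "JJ 1 tS = 1" "JJ 0 t0 = 1" "JJ 1 t0 = 0" "JJ 0 t1 = 3" "JJ 1 t1 = 2"
  by (simp_all add: Jloss_def lX_def cX_def w_def tS_def t0_def t1_def pX_def)

lemma rc_obj_label: "rc_obj l polc (label pistar \<tau>) \<theta> = Jloss l polc pistar \<theta> \<tau>"
  by (induction \<tau>) (auto simp: rc_obj_def label_def Jloss_def)

lemma rc_obj_append: "rc_obj l polc (xs @ ys) \<theta> = rc_obj l polc xs \<theta> + rc_obj l polc ys \<theta>"
  by (simp add: rc_obj_def)

lemma rc_data_Suc: "rc_data pistar \<omega> (Suc n) = rc_data pistar \<omega> n @ label pistar (\<omega> n)"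
  by (simp add: rc_data_def)

lemma rc_obj_data: "rc_obj l polc (rc_data pistar \<omega> n) \<theta> = (\<Sum>i<n. Jloss l polc pistar \<theta> (\<omega> i))"
  by (induction n) (simp_all add: rc_data_Suc rc_obj_append rc_obj_label, simp add: rc_data_def rc_obj_def)

definition GG :: "nat \<Rightarrow> (nat \<Rightarrow> traj) set" where
  "GG m = {\<omega>. (\<forall>i<m. \<omega> i = tS) \<and> (\<forall>i\<ge>m. \<omega> i \<in> {t0, t1})}"

lemma diff_G:
  assumes "\<omega> \<in> GG m"
  shows "rc_obj lX cX (rc_data pX \<omega> n) 1 - rc_obj lX cX (rc_data pX \<omega> n) 0
           = (if n \<le> m then real n else 2 * real m - real n)"
proof (induction n)
  case 0 then show ?case by (simp add: rc_data_def rc_obj_def)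
next
  case (Suc n)
  have "JJ 1 (\<omega> n) - JJ 0 (\<omega> n) = (if n < m then 1 else -1)"
  proof (cases "n < m")
    case True then show ?thesis using assms by (simp add: GG_def J_vals)
  next
    case False
    then have "\<omega> n = t0 \<or> \<omega> n = t1" using assms by (simp add: GG_def)
    then show ?thesis using False by (auto simp: J_vals)
  qed
  then show ?case using Suc
    by (simp add: rc_data_Suc rc_obj_append rc_obj_label split: if_splits)
qed

lemma sel_G:
  assumes "\<omega> \<in> GG m" and sel: "\<forall>D. is_argmin_on {0,1} (rc_obj lX cX D) (sel D)" and "n > 2*m"
  shows "sel (rc_data pX \<omega> n) = 1"
proof -
  have d: "rc_obj lX cX (rc_data pX \<omega> n) 1 < rc_obj lX cX (rc_data pX \<omega> n) 0"
    using diff_G[OF assms(1), of n] assms(3) by (simp split: if_splits)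
  from sel have "sel (rc_data pX \<omega> n) \<in> {0,1}" and
    "rc_obj lX cX (rc_data pX \<omega> n) (sel (rc_data pX \<omega> n)) \<le> rc_obj lX cX (rc_data pX \<omega> n) 1"
    by (auto simp: is_argmin_on_def)
  then show ?thesis using d by auto
qed


lemma meas_prefix:
  assumes "{0..<k} \<subseteq> I"
  shows "(\<lambda>\<omega>. map \<omega> [0..<k]) \<in> measurable (PiM I (\<lambda>_. count_space (UNIV::'a::countable set))) (count_space UNIV)"
  using assms
proof (induction k)
  case 0 then show ?case by simp
next
  case (Suc k)
  have k: "k \<in> I" and k': "{0..<k} \<subseteq> I" using Suc.prems by auto
  have "(\<lambda>\<omega>. (map \<omega> [0..<k], \<omega> k)) \<in> measurable (PiM I (\<lambda>_. count_space (UNIV::'a set))) (count_space UNIV \<Otimes>\<^sub>M count_space UNIV)"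
    using Suc.IH[OF k'] k by (intro measurable_Pair) (auto intro!: measurable_component_singleton)
  then have "(\<lambda>\<omega>. (map \<omega> [0..<k], \<omega> k)) \<in> measurable (PiM I (\<lambda>_. count_space (UNIV::'a set))) (count_space UNIV)"
    by (simp add: pair_measure_countable)
  then have "(\<lambda>p. fst p @ [snd p]) \<circ> (\<lambda>\<omega>. (map \<omega> [0..<k], \<omega> k)) \<in> measurable (PiM I (\<lambda>_. count_space (UNIV::'a set))) (count_space UNIV)"
    by (rule measurable_comp) simp
  then show ?case by (simp add: comp_def)
qed


lemma rc_data_map: "rc_data pistar \<omega> i = concat (map (label pistar) (map \<omega> [0..<i]))"
  by (simp add: rc_data_def comp_def)

lemma IT_rc: "Ionescu_Tulcea (rc_kernel p0 P T polc pistar sel m) (\<lambda>_. count_space UNIV)"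
proof (rule Ionescu_Tulcea.intro)
  fix i
  define g where "g xs = measure_pmf (traj_pmf p0 P (if i < m then pistar else polc (sel (concat (map (label pistar) xs)))) T)" for xs
  have "rc_kernel p0 P T polc pistar sel m i = g \<circ> (\<lambda>\<omega>. map \<omega> [0..<i])"
    by (auto simp: rc_kernel_def g_def rc_data_map fun_eq_iff)
  moreover have "g \<in> measurable (count_space UNIV) (subprob_algebra (count_space UNIV))"
    unfolding measurable_count_space_eq1 by (simp add: g_def measure_subprob)
  ultimately show "rc_kernel p0 P T polc pistar sel m i \<in> measurable (PiM {0..<i} (\<lambda>_. count_space UNIV)) (subprob_algebra (count_space UNIV))"
    using measurable_comp[OF meas_prefix[of i "{0..<i}"]] by simp
next
  fix i x show "prob_space (rc_kernel p0 P T polc pistar sel m i x)"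
    by (simp add: rc_kernel_def prob_space_measure_pmf)
qed

lemma rc_AE: "AE \<omega> in rc_measure p0X PX (Suc 0) cX pX sel m. \<omega> \<in> GG m"
proof -
  interpret IT: Ionescu_Tulcea "rc_kernel p0X PX (Suc 0) cX pX sel m" "\<lambda>_. count_space UNIV" by (rule IT_rc)
  let ?M = "\<lambda>_::nat. count_space (UNIV::traj set)"
  define S where "S n = (if n < m then {tS} else {t0,t1})" for n
  have supp: "set_pmf (traj_pmf p0X PX (if n<m then pX else cX \<theta>) (Suc 0)) \<subseteq> S n" for n \<theta>
    by (cases "\<theta> = 0") (auto simp: S_def traj_S traj_0 traj_1)
  have null: "IT.PF.emb UNIV {n} (PiE {n} (\<lambda>_. - S n)) \<in> null_sets IT.PF.lim" for n
  proof -
    define X where "X = PiE {n} (\<lambda>_. - S n)"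
    have Xs: "X \<in> sets (PiM {n} ?M)" unfolding X_def by (rule sets_PiM_I_finite) auto
    have A: "IT.PF.emb {0..<Suc n} {n} X \<in> sets (PiM {0..<Suc n} ?M)"
      using Xs by (intro measurable_prod_emb) auto
    have "emeasure IT.PF.lim (IT.PF.emb UNIV {n} X) = emeasure (IT.CI {n}) X"
      by (rule IT.lim) (simp_all add: Xs)
    also have "\<dots> = emeasure (IT.C 0 (Suc n) (\<lambda>_. undefined)) (IT.PF.emb {0..<Suc n} {n} X)"
      by (rule IT.emeasure_CI) (auto simp: Xs)
    also have "\<dots> = emeasure (IT.C 0 n (\<lambda>_. undefined) \<bind> IT.eP n) (IT.PF.emb {0..<Suc n} {n} X)"
      by (simp only: IT.C.simps add_0)
    also have "\<dots> = \<integral>\<^sup>+y. emeasure (IT.eP n y) (IT.PF.emb {0..<Suc n} {n} X) \<partial>IT.C 0 n (\<lambda>_. undefined)"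
    proof (rule emeasure_bind[where N="PiM {0..<Suc n} ?M"])
      have u: "(\<lambda>_. undefined) \<in> space (PiM {0..<0} ?M)" by (simp add: space_PiM)
      show "space (IT.C 0 n (\<lambda>_. undefined)) \<noteq> {}"
        using prob_space.not_empty[OF IT.prob_space_C[OF u]] .
      show "IT.eP n \<in> IT.C 0 n (\<lambda>_. undefined) \<rightarrow>\<^sub>M subprob_algebra (Pi\<^sub>M {0..<Suc n} ?M)"
      proof -
        have sc: "sets (IT.C 0 n (\<lambda>_. undefined)) = sets (PiM {0..<n} ?M)" using IT.sets_C[OF u, of n] by simp
        show ?thesis unfolding measurable_cong_sets[OF sc refl] by (rule IT.measurable_eP)
      qed
      show "IT.PF.emb {0..<Suc n} {n} X \<in> sets (Pi\<^sub>M {0..<Suc n} ?M)" by (rule A)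
    qed
    also have "\<dots> = \<integral>\<^sup>+y. 0 \<partial>IT.C 0 n (\<lambda>_. undefined)"
    proof (rule nn_integral_cong)
      fix y assume "y \<in> space (IT.C 0 n (\<lambda>_. undefined))"
      then have y: "y \<in> space (PiM {0..<n} ?M)"
        by (subst (asm) IT.space_C) (simp_all add: space_PiM)
      have pre: "(\<lambda>x. y(n := x)) -` IT.PF.emb {0..<Suc n} {n} X \<inter> space (count_space UNIV) = - S n"
        using y by (auto simp: X_def prod_emb_def space_PiM PiE_iff extensional_def)
      have "emeasure (IT.eP n y) (IT.PF.emb {0..<Suc n} {n} X) = emeasure (rc_kernel p0X PX (Suc 0) cX pX sel m n y) (- S n)"
        using IT.emeasure_eP[OF y A] pre by simp
      also have "\<dots> = 0"
        unfolding rc_kernel_def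
        by (rule null_setsD1, rule in_null_sets_measure_pmfI) (use supp in blast)
      finally show "emeasure (IT.eP n y) (IT.PF.emb {0..<Suc n} {n} X) = 0" .
    qed
    finally show ?thesis
      using Xs by (simp add: null_sets_def X_def[symmetric])
  qed
  have "AE \<omega> in IT.PF.lim. \<omega> n \<in> S n" for n
    by (rule AE_I'[OF null[of n]]) (auto simp: prod_emb_def PiE_iff space_PiM)
  then have "AE \<omega> in IT.PF.lim. \<forall>n. \<omega> n \<in> S n"
    by (simp add: AE_all_countable)
  then have aeL: "AE \<omega> in IT.PF.lim. \<omega> \<in> GG m"
    by (rule AE_mp) (auto simp: GG_def S_def intro!: AE_I2 split: if_splits)
  have eqL: "rc_measure p0X PX (Suc 0) cX pX sel m = IT.PF.lim"
    unfolding rc_measure_def by (rule refl)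
  show ?thesis unfolding eqL by (rule aeL)
qed

lemma rc_meas_facts:
  "prob_space (rc_measure p0X PX (Suc 0) cX pX sel m) \<and>
   sets (rc_measure p0X PX (Suc 0) cX pX sel m) = sets (PiM UNIV (\<lambda>_. count_space (UNIV::traj set))) \<and>
   space (rc_measure p0X PX (Suc 0) cX pX sel m) = UNIV"
proof -
  interpret IT: Ionescu_Tulcea "rc_kernel p0X PX (Suc 0) cX pX sel m" "\<lambda>_. count_space UNIV" by (rule IT_rc)
  let ?M = "\<lambda>_::nat. count_space (UNIV::traj set)"
  have eqL: "rc_measure p0X PX (Suc 0) cX pX sel m = IT.PF.lim"
    unfolding rc_measure_def by (rule refl)
  have sp: "space IT.PF.lim = UNIV" by (simp add: space_PiM)
  have X: "space (PiM {} ?M) \<in> sets (PiM {} ?M)" by simp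
  have "emeasure IT.PF.lim (IT.PF.emb UNIV {} (space (PiM {} ?M))) = emeasure (IT.CI {}) (space (PiM {} ?M))"
    by (rule IT.lim) simp_all
  also have "\<dots> = 1"
  proof -
    interpret P0: prob_space "IT.CI {}" by (rule IT.PF.prob_space_P) simp_all
    show ?thesis using P0.emeasure_space_1 IT.PF.space_P[of "{}"] by simp
  qed
  moreover have pre: "(\<lambda>x. restrict x {}) -` {\<lambda>x. undefined} = UNIV" by (auto simp: restrict_def)
  ultimately have "emeasure IT.PF.lim (space IT.PF.lim) = 1"
    by (simp add: prod_emb_def space_PiM sp pre)
  then have "prob_space IT.PF.lim" by (rule prob_spaceI)
  then show ?thesis using eqL sp by simp
qed

lemma pred_sel:
  "Measurable.pred (PiM UNIV (\<lambda>_. count_space (UNIV::traj set))) (\<lambda>\<omega>. sel (rc_data pX \<omega> k) = (0::real))"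
proof -
  have "(\<lambda>xs. sel (concat (map (label pX) xs)) = (0::real)) \<circ> (\<lambda>\<omega>. map \<omega> [0..<k])
        \<in> measurable (PiM UNIV (\<lambda>_. count_space (UNIV::traj set))) (count_space UNIV)"
    by (rule measurable_comp[OF meas_prefix]) simp_all
  then show ?thesis by (simp add: comp_def rc_data_map)
qed

lemma tendsto01:
  assumes "\<And>n. f n \<in> {0, 1::real}"
  shows "f \<longlonglongrightarrow> 0 \<longleftrightarrow> (\<exists>K. \<forall>n\<ge>K. f n = 0)"
proof
  assume "f \<longlonglongrightarrow> 0"
  then have "eventually (\<lambda>n. dist (f n) 0 < 1/2) sequentially"
    by (rule tendstoD) simp
  then obtain K where "\<forall>n\<ge>K. dist (f n) 0 < 1/2" by (auto simp: eventually_sequentially)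
  then have "\<forall>n\<ge>K. f n = 0"
  proof (intro allI impI)
    fix n assume "n \<ge> K"
    then have "dist (f n) 0 < 1/2" using \<open>\<forall>n\<ge>K. dist (f n) 0 < 1/2\<close> by blast
    moreover have "f n = 0 \<or> f n = 1" using assms[of n] by blast
    ultimately show "f n = 0" by auto
  qed
  then show "\<exists>K. \<forall>n\<ge>K. f n = 0" by blast
next
  assume "\<exists>K. \<forall>n\<ge>K. f n = 0"
  then obtain K where "\<forall>n\<ge>K. f n = 0" by auto
  then have "eventually (\<lambda>n. f n = 0) sequentially" by (auto simp: eventually_sequentially)
  then show "f \<longlonglongrightarrow> 0" by (rule tendsto_eventually)
qed

lemma stake_const: "(\<forall>n. \<omega> !! n = x) \<Longrightarrow> stake N \<omega> = replicate N x"
  by (simp add: list_eq_iff_nth_eq)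

lemma hc_obj_rep: "hc_obj l polc pistar (replicate N \<tau>) \<theta> = real N * Jloss l polc pistar \<theta> \<tau>"
  by (induction N) (simp_all add: hc_obj_def algebra_simps)

lemma hc_ok:
  assumes selh: "\<forall>\<tau>s. is_argmin_on {0,1} (hc_obj lX cX pX \<tau>s) (selh \<tau>s)"
  shows "AE \<omega> in stream_space (measure_pmf (traj_pmf p0X PX pX (Suc 0))). (\<lambda>N. selh (stake N \<omega>)) \<longlonglongrightarrow> 0"
proof -
  interpret P: prob_space "measure_pmf (return_pmf tS)" by (rule prob_space_measure_pmf)
  have "AE x in stream_space (measure_pmf (return_pmf tS)). stream_all (\<lambda>y. y = tS) x"
    by (rule prob_space.AE_stream_all[OF prob_space_measure_pmf]) (simp_all add: AE_measure_pmf_iff)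
  then show ?thesis unfolding traj_S
  proof (rule AE_mp, intro AE_I2 impI)
    fix \<omega> :: "traj stream" assume "stream_all (\<lambda>y. y = tS) \<omega>"
    then have st: "stake N \<omega> = replicate N tS" for N by (intro stake_const) (simp add: stream_all_def)
    have "selh (stake N \<omega>) = 0" if "N \<ge> 1" for N
    proof -
      have "selh (stake N \<omega>) \<in> {0,1}" and le: "hc_obj lX cX pX (stake N \<omega>) (selh (stake N \<omega>)) \<le> hc_obj lX cX pX (stake N \<omega>) 0"
        using selh by (auto simp: is_argmin_on_def)
      moreover have "hc_obj lX cX pX (stake N \<omega>) 0 < hc_obj lX cX pX (stake N \<omega>) 1"
        using that by (simp add: st hc_obj_rep J_vals)
      ultimately show ?thesis by auto
    qed
    then have "eventually (\<lambda>N. selh (stake N \<omega>) = 0) sequentially"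
      unfolding eventually_sequentially by blast
    then show "(\<lambda>N. selh (stake N \<omega>)) \<longlonglongrightarrow> 0" by (rule tendsto_eventually)
  qed
qed


lemma rc_fail:
  assumes sel: "\<forall>D. is_argmin_on {0,1} (rc_obj lX cX D) (sel D)"
  shows "measure (rc_measure p0X PX (Suc 0) cX pX sel m)
           {\<omega>. \<not> ((\<lambda>N. sel (rc_data pX \<omega> (m + N))) \<longlonglongrightarrow> 0)} = 1"
proof -
  let ?L = "rc_measure p0X PX (Suc 0) cX pX sel m"
  note facts = rc_meas_facts[where sel=sel and m=m]
  have sp: "space ?L = UNIV" using facts by blast
  have setsL: "sets ?L = sets (PiM UNIV (\<lambda>_. count_space (UNIV::traj set)))" using facts by blast
  interpret L: prob_space ?L using facts by simp
  have vals: "sel D \<in> {0,1}" for D using sel by (auto simp: is_argmin_on_def)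
  define E where "E = {\<omega>. \<not> ((\<lambda>N. sel (rc_data pX \<omega> (m + N))) \<longlonglongrightarrow> 0)}"
  have E_eq: "E = {\<omega> \<in> space ?L. \<not> (\<exists>K. \<forall>n\<ge>K. sel (rc_data pX \<omega> (m + n)) = 0)}"
  proof -
    have "((\<lambda>N. sel (rc_data pX \<omega> (m+N))) \<longlonglongrightarrow> 0) \<longleftrightarrow> (\<exists>K. \<forall>n\<ge>K. sel (rc_data pX \<omega> (m + n)) = 0)" for \<omega>
      by (rule tendsto01) (rule vals)
    then show ?thesis unfolding E_def sp by auto
  qed
  have [measurable]: "\<And>k. Measurable.pred (PiM UNIV (\<lambda>_. count_space (UNIV::traj set))) (\<lambda>\<omega>. sel (rc_data pX \<omega> k) = (0::real))"
    by (rule pred_sel)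
  have "Measurable.pred (PiM UNIV (\<lambda>_. count_space (UNIV::traj set))) (\<lambda>\<omega>. \<not> (\<exists>K. \<forall>n\<ge>K. sel (rc_data pX \<omega> (m + n)) = 0))"
    apply (rule pred_intros_logic(2))
    apply (rule pred_intros_countable(2))
    apply (rule pred_intros_countable(1))
    apply (rule pred_intros_imp')
    apply (rule pred_sel)
    done
  then have "Measurable.pred ?L (\<lambda>\<omega>. \<not> (\<exists>K. \<forall>n\<ge>K. sel (rc_data pX \<omega> (m + n)) = 0))"
    unfolding measurable_cong_sets[OF setsL refl[of "sets (count_space (UNIV::bool set))"]] by assumption
  then have Es: "E \<in> sets ?L" unfolding E_eq pred_def .
  have aeE: "AE \<omega> in ?L. \<omega> \<in> E"
    using rc_AE[where sel=sel and m=m]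
  proof (rule AE_mp, intro AE_I2 impI)
    fix \<omega> assume G: "\<omega> \<in> GG m"
    have "eventually (\<lambda>N. sel (rc_data pX \<omega> (m + N)) = 1) sequentially"
      unfolding eventually_sequentially
    proof (intro exI[of _ "Suc m"] allI impI)
      fix n assume "Suc m \<le> n"
      then show "sel (rc_data pX \<omega> (m + n)) = 1" by (intro sel_G[OF G sel]) simp
    qed
    then have t1: "(\<lambda>N. sel (rc_data pX \<omega> (m + N))) \<longlonglongrightarrow> 1" by (rule tendsto_eventually)
    show "\<omega> \<in> E"
    proof (unfold E_def, rule CollectI, rule notI)
      assume "(\<lambda>N. sel (rc_data pX \<omega> (m + N))) \<longlonglongrightarrow> 0"
      from LIMSEQ_unique[OF this t1] show False by simp
    qed
  qed
  have "measure ?L E = 1" using L.prob_eq_1[OF Es] aeE by blast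
  then show ?thesis unfolding E_def .
qed


theorem theorem1:
  "\<exists>(p0 :: nat pmf) (P :: nat \<Rightarrow> nat \<Rightarrow> nat pmf) (T :: nat) (l :: nat \<Rightarrow> nat \<Rightarrow> real)
      (pistar :: nat \<Rightarrow> nat) (polc :: real \<Rightarrow> nat \<Rightarrow> nat) (\<Theta> :: real set) (\<theta>star :: real) (c :: real).
     (\<forall>u v. 0 \<le> l u v) \<and>
     \<comment> \<open>the estimators are well defined: all empirical minimizations have a minimizer\<close>
     (\<forall>\<tau>s. \<exists>\<theta>. is_argmin_on \<Theta> (hc_obj l polc pistar \<tau>s) \<theta>) \<and>
     (\<forall>D. \<exists>\<theta>. is_argmin_on \<Theta> (rc_obj l polc D) \<theta>) \<and>
     \<comment> \<open>(i) unique minimizer of the expected trajectory loss\<close>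
     \<theta>star \<in> \<Theta> \<and>
     (\<forall>\<theta>\<in>\<Theta>. \<theta> \<noteq> \<theta>star \<longrightarrow>
        exp_loss p0 P T l polc pistar \<theta>star < exp_loss p0 P T l polc pistar \<theta>) \<and>
     \<comment> \<open>(ii) human-centric learning converges to theta* almost surely, for any choice of minimizers\<close>
     (\<forall>selh :: traj list \<Rightarrow> real.
        (\<forall>\<tau>s. is_argmin_on \<Theta> (hc_obj l polc pistar \<tau>s) (selh \<tau>s)) \<longrightarrow>
        (AE \<omega> in stream_space (measure_pmf (traj_pmf p0 P pistar T)).
           (\<lambda>N. selh (stake N \<omega>)) \<longlonglongrightarrow> \<theta>star)) \<and>
     \<comment> \<open>(iii) robot-centric learning fails to converge to theta* with probability >= c e^-m\<close>
     0 < c \<and>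
     (\<forall>sel :: (nat \<times> nat) list \<Rightarrow> real.
        (\<forall>D. is_argmin_on \<Theta> (rc_obj l polc D) (sel D)) \<longrightarrow>
        (\<forall>m::nat. 1 \<le> m \<longrightarrow>
           c * exp (- real m) \<le>
             measure (rc_measure p0 P T polc pistar sel m)
               {\<omega>. \<not> ((\<lambda>N. sel (rc_data pistar \<omega> (m + N))) \<longlonglongrightarrow> \<theta>star)}))"
proof -
  have am: "\<exists>\<theta>. is_argmin_on {0,1} f \<theta>" for f :: "real \<Rightarrow> real"
    by (cases "f 0 \<le> f 1") (auto simp: is_argmin_on_def intro: exI[of _ 0] exI[of _ 1])
  have e0: "exp_loss p0X PX (Suc 0) lX cX pX 0 = ennreal 1"
    by (simp add: exp_loss_def traj_0 J_vals)
  have e1: "\<theta> \<noteq> 0 \<Longrightarrow> exp_loss p0X PX (Suc 0) lX cX pX \<theta> = ennreal (JJ \<theta> t1)" for \<theta>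
    by (simp add: exp_loss_def traj_1)
  have el: "\<forall>\<theta>\<in>{0,1}. \<theta> \<noteq> 0 \<longrightarrow> exp_loss p0X PX (Suc 0) lX cX pX 0 < exp_loss p0X PX (Suc 0) lX cX pX \<theta>"
    using e0 e1[of 1] by (simp add: J_vals)
  have rc: "\<forall>sel :: (nat \<times> nat) list \<Rightarrow> real.
        (\<forall>D. is_argmin_on {0,1} (rc_obj lX cX D) (sel D)) \<longrightarrow>
        (\<forall>m::nat. 1 \<le> m \<longrightarrow>
           1 * exp (- real m) \<le>
             measure (rc_measure p0X PX (Suc 0) cX pX sel m)
               {\<omega>. \<not> ((\<lambda>N. sel (rc_data pX \<omega> (m + N))) \<longlonglongrightarrow> 0)})"
    using rc_fail by simp
  have l0: "\<forall>u v. 0 \<le> lX u v" by (simp add: lX_def w_def)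
  show ?thesis
    apply (rule exI[of _ p0X], rule exI[of _ PX], rule exI[of _ "Suc 0"], rule exI[of _ lX],
           rule exI[of _ pX], rule exI[of _ cX], rule exI[of _ "{0,1}"], rule exI[of _ 0], rule exI[of _ 1])
    using am el rc l0 hc_ok by simp
qed

end
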